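(* Let $N,d\ge1$, $T>0$, and fix initial data $x(0),v(0)\in\mathbb{R}^{Nd}$. For each $n\ge2$ let $x^n$ be the solution on $[0,T]$ of the system $\dot x^n_i=v^n_i$, $\dot v^n_i=\frac1N\sum_{k=1}^N(v^n_k-v^n_i)\psi_n(|x^n_i-x^n_k|)$ with initial data $x^n(0)=x(0)$, $v^n(0)=v(0)$ (independent of $n$). Then there exists an interval $[0,t]$, $t>0$, on which all velocities $v^n$ are uniformly (in $n$) Hölder continuous.
   Context: $\alpha\in(0,1)$, $\psi(s)=s^{-\alpha}$ for $s>0$, $\psi(0)=0$. For each $n$, $\psi_n(s)=\psi(s)$ for $s\ge (n-1)^{-1/\alpha}$, $\psi_n(s)=n$ for $s\le n^{-1/\alpha}$, and $\psi_n$ is smooth and monotone on $[n^{-1/\alpha},(n-1)^{-1/\alpha}]$; the system then has a unique global $C^2$ solution. *)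

theory Defs
  imports "HOL-Analysis.Analysis"
begin

definition smooth_on :: "real set \<Rightarrow> (real \<Rightarrow> real) \<Rightarrow> bool" where
  "smooth_on S f \<longleftrightarrow>
     (\<exists>D :: nat \<Rightarrow> real \<Rightarrow> real. D 0 = f \<and>
        (\<forall>k. \<forall>s\<in>S. (D k has_real_derivative D (Suc k) s) (at s within S)))"

end

theory Submission
  imports Defs
begin


lemma inner_sgn_self: "inner x (sgn x) = norm (x::'a::real_inner)"
  by (cases "x = 0") (simp_all add: sgn_div_norm power2_norm_eq_inner[symmetric] power2_eq_square)

lemma incr_bound:
  fixes f :: "real \<Rightarrow> 'a::real_inner" and g :: "real \<Rightarrow> real"
  assumes ab: "a \<le> b" and cf: "continuous_on {a..b} f" and cg: "continuous_on {a..b} g"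
   and df: "\<And>r. a < r \<Longrightarrow> r < b \<Longrightarrow> (f has_vector_derivative f' r) (at r)"
   and dg: "\<And>r. a < r \<Longrightarrow> r < b \<Longrightarrow> (g has_real_derivative g' r) (at r)"
   and bd: "\<And>r. a < r \<Longrightarrow> r < b \<Longrightarrow> norm (f' r) \<le> g' r"
  shows "norm (f b - f a) \<le> g b - g a"
proof -
  define u where "u = sgn (f b - f a)"
  have nu: "norm u \<le> 1" by (simp add: u_def norm_sgn)
  have "(\<lambda>r. inner (f r) u - g r) a \<ge> (\<lambda>r. inner (f r) u - g r) b"
  proof (rule DERIV_nonpos_imp_decreasing_open[OF ab])
    fix r assume r: "a<r" "r<b"
    have "((\<lambda>r. inner (f r) u) has_real_derivative inner (f' r) u) (at r)"
      using bounded_linear.has_vector_derivative[OF bounded_linear_inner_left df[OF r]]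
      by (simp add: has_real_derivative_iff_has_vector_derivative)
    then have "((\<lambda>r. inner (f r) u - g r) has_real_derivative inner (f' r) u - g' r) (at r)"
      by (intro DERIV_diff dg r)
    moreover have "inner (f' r) u \<le> g' r"
    proof -
      have "inner (f' r) u \<le> norm (f' r) * norm u" by (rule norm_cauchy_schwarz)
      also have "\<dots> \<le> norm (f' r)" using nu by (simp add: mult_left_le)
      finally show ?thesis using bd[OF r] by linarith
    qed
    ultimately show "\<exists>y. ((\<lambda>r. inner (f r) u - g r) has_real_derivative y) (at r) \<and> y \<le> 0"
      by (intro exI[of _ "inner (f' r) u - g' r"]) auto
  next
    show "continuous_on {a..b} (\<lambda>r. inner (f r) u - g r)" by (intro continuous_intros cf cg)
  qed
  then have "inner (f b - f a) u \<le> g b - g a" by (simp add: inner_diff_left)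
  then show ?thesis by (simp add: u_def inner_sgn_self)
qed

lemma powr_subadd:
  fixes a b p :: real
  assumes a: "0 \<le> a" and b: "0 \<le> b" and p: "0 < p" "p \<le> 1"
  shows "(a + b) powr p \<le> a powr p + b powr p"
proof (cases "a + b = 0")
  case True then show ?thesis using a b by simp
next
  case False
  then have s: "a + b > 0" using a b by linarith
  have key: "y \<le> y powr p" if "0 \<le> y" "y \<le> 1" for y :: real
  proof (cases "y = 0")
    case True then show ?thesis by simp
  next
    case False
    then have "y powr 1 \<le> y powr p" using that p by (intro powr_mono') auto
    then show ?thesis using that False by simp
  qed
  have "a / (a+b) \<le> (a/(a+b)) powr p" using a b s by (intro key) auto
  moreover have "b / (a+b) \<le> (b/(a+b)) powr p" using a b s by (intro key) auto
  moreover have "a/(a+b) + b/(a+b) = 1" using s by (simp add: add_divide_distrib[symmetric])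
  ultimately have "1 \<le> (a/(a+b)) powr p + (b/(a+b)) powr p"
    by linarith
  also have "\<dots> = (a powr p + b powr p) / (a+b) powr p"
    using a b s by (simp add: powr_divide add_divide_distrib)
  finally show ?thesis using s by (simp add: divide_simps split: if_splits)
qed

lemma powr_diff_le:
  fixes s s' p :: real
  assumes "0 \<le> s'" "s' \<le> s" "0 < p" "p \<le> 1"
  shows "s powr p - s' powr p \<le> (s - s') powr p"
  using powr_subadd[of "s - s'" s' p] assms by simp



definition lipr :: "real \<Rightarrow> real set \<Rightarrow> (real \<Rightarrow> real) \<Rightarrow> bool" where
  "lipr L S f \<longleftrightarrow> (\<forall>x\<in>S. \<forall>y\<in>S. x \<le> y \<longrightarrow> \<bar>f y - f x\<bar> \<le> L * (y - x))"

lemma lipr_join: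
  assumes "p \<le> q" "lipr L {p..q} f" "lipr L {q..} f"
  shows "lipr L {p..} f"
  unfolding lipr_def
proof (intro ballI impI)
  fix x y assume xy: "x \<in> {p..}" "y \<in> {p..}" "x \<le> y"
  show "\<bar>f y - f x\<bar> \<le> L * (y - x)"
  proof (cases "y \<le> q")
    case True then show ?thesis using assms(2) xy unfolding lipr_def by auto
  next
    case False
    show ?thesis
    proof (cases "x \<le> q")
      case True
      have "\<bar>f q - f x\<bar> \<le> L * (q - x)" using assms(2) xy True \<open>p \<le> q\<close> unfolding lipr_def by auto
      moreover have "\<bar>f y - f q\<bar> \<le> L * (y - q)" using assms(3) xy False unfolding lipr_def by auto
      ultimately show ?thesis by (simp add: algebra_simps)
    next
      case False2: False
      then show ?thesis using assms(3) xy unfolding lipr_def by auto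
    qed
  qed
qed

lemma lipr_mono: "lipr L S f \<Longrightarrow> L \<le> L' \<Longrightarrow> lipr L' S f"
  unfolding lipr_def by (meson diff_ge_0_iff_ge mult_right_mono order_trans)

locale psiloc =
  fixes \<alpha> :: real and p :: "real \<Rightarrow> real" and n :: nat
  assumes alpha: "0 < \<alpha>" "\<alpha> < 1" and n2: "n \<ge> 2"
    and far: "\<And>s. s \<ge> (real n - 1) powr (- 1 / \<alpha>) \<Longrightarrow> p s = s powr (- \<alpha>)"
    and near: "\<And>s. 0 \<le> s \<Longrightarrow> s \<le> real n powr (- 1 / \<alpha>) \<Longrightarrow> p s = real n"
    and sm: "smooth_on {real n powr (- 1 / \<alpha>) .. (real n - 1) powr (- 1 / \<alpha>)} p"
    and mo: "antimono_on {real n powr (- 1 / \<alpha>) .. (real n - 1) powr (- 1 / \<alpha>)} p"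
begin

definition "a = real n powr (- 1 / \<alpha>)"
definition "b = (real n - 1) powr (- 1 / \<alpha>)"

lemma ab: "0 < a" "a < b" "a powr (-\<alpha>) = real n" "b powr (-\<alpha>) = real n - 1"
proof -
  show "0 < a" using n2 by (simp add: a_def)
  show "a < b" unfolding a_def b_def using n2 alpha
    by (intro powr_less_mono2_neg) auto
  show "a powr (-\<alpha>) = real n" using n2 alpha by (simp add: a_def powr_powr)
  show "b powr (-\<alpha>) = real n - 1" using n2 alpha by (simp add: b_def powr_powr)
qed

lemma p_mid: "a \<le> x \<Longrightarrow> x \<le> y \<Longrightarrow> y \<le> b \<Longrightarrow> p y \<le> p x"
  using mo unfolding a_def b_def monotone_on_def by auto

lemma p_a: "p a = real n" using near[of a] ab by (simp add: a_def)
lemma p_b: "p b = real n - 1" using far[of b] ab by (simp add: b_def)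

lemma p_nonneg: "0 \<le> s \<Longrightarrow> 0 \<le> p s"
proof -
  assume s: "0 \<le> s"
  consider "s \<le> a" | "a \<le> s" "s \<le> b" | "b \<le> s" by linarith
  then show ?thesis
  proof cases
    case 1 then show ?thesis using near[of s] s by (simp add: a_def)
  next
    case 2 then have "p b \<le> p s" by (intro p_mid) auto
    then show ?thesis using p_b n2 by simp
  next
    case 3 then show ?thesis using far[of s] by (simp add: b_def)
  qed
qed

lemma p_bound: "0 < s \<Longrightarrow> p s \<le> 2 * s powr (-\<alpha>)"
proof -
  assume s: "0 < s"
  have sp: "0 \<le> s powr (-\<alpha>)" by simp
  consider "s \<le> a" | "a \<le> s" "s \<le> b" | "b \<le> s" by linarith
  then show ?thesis
  proof cases
    case 1
    have "a powr (-\<alpha>) \<le> s powr (-\<alpha>)" using 1 s alpha by (intro powr_mono2') auto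
    then show ?thesis using near[of s] s 1 ab by (simp add: a_def)
  next
    case 2
    have "p s \<le> p a" using 2 by (intro p_mid) auto
    moreover have "b powr (-\<alpha>) \<le> s powr (-\<alpha>)" using 2 s alpha by (intro powr_mono2') auto
    ultimately show ?thesis using p_a ab n2 by simp
  next
    case 3 then show ?thesis using far[of s] by (simp add: b_def)
  qed
qed

lemma lip_near: "L \<ge> 0 \<Longrightarrow> lipr L {0..a} p"
  unfolding lipr_def using near by (simp add: a_def)

lemma lip_far: "lipr (\<alpha> * b powr (-\<alpha> - 1)) {b..} p"
  unfolding lipr_def
proof (intro ballI impI)
  fix x y assume xy: "x \<in> {b..}" "y \<in> {b..}" "x \<le> y"
  have b0: "0 < b" using ab by linarith
  have "norm (y powr (-\<alpha>) - x powr (-\<alpha>)) \<le> \<alpha> * b powr (-\<alpha> - 1) * y - \<alpha> * b powr (-\<alpha> - 1) * x"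
  proof (rule incr_bound[where f' = "\<lambda>r. -\<alpha> * r powr (-\<alpha> - 1)" and g' = "\<lambda>r. \<alpha> * b powr (-\<alpha> - 1)"])
    show "x \<le> y" by fact
    show "continuous_on {x..y} (\<lambda>s. s powr - \<alpha>)" using xy b0
      by (intro continuous_intros) auto
    show "continuous_on {x..y} (\<lambda>s. \<alpha> * b powr (- \<alpha> - 1) * s)" by (intro continuous_intros)
    fix r assume r: "x < r" "r < y"
    then have r0: "0 < r" using xy b0 by auto
    show "((\<lambda>s. s powr - \<alpha>) has_vector_derivative - \<alpha> * r powr (- \<alpha> - 1)) (at r)"
      using has_real_derivative_powr[OF r0, of "-\<alpha>"]
      by (simp add: has_real_derivative_iff_has_vector_derivative)
    show "((\<lambda>s. \<alpha> * b powr (- \<alpha> - 1) * s) has_real_derivative \<alpha> * b powr (- \<alpha> - 1)) (at r)"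
      by (auto intro!: derivative_eq_intros)
    have "r powr (- \<alpha> - 1) \<le> b powr (- \<alpha> - 1)" using r xy b0 alpha by (intro powr_mono2') auto
    then show "norm (- \<alpha> * r powr (- \<alpha> - 1)) \<le> \<alpha> * b powr (- \<alpha> - 1)"
      using alpha by (simp add: abs_mult)
  qed
  then show "\<bar>p y - p x\<bar> \<le> \<alpha> * b powr (- \<alpha> - 1) * (y - x)"
    using xy far by (simp add: b_def algebra_simps)
qed

lemma lip_mid: "\<exists>B\<ge>0. lipr B {a..b} p"
proof -
  obtain D :: "nat \<Rightarrow> real \<Rightarrow> real" where D0: "D 0 = p"
    and DD: "\<And>k s. s \<in> {a..b} \<Longrightarrow> (D k has_real_derivative D (Suc k) s) (at s within {a..b})"
    using sm unfolding smooth_on_def a_def b_def by blast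
  have "continuous_on {a..b} (D 1)"
    unfolding continuous_on_eq_continuous_within
    using DD[of _ 1] DERIV_continuous by blast
  then have "compact (D 1 ` {a..b})" by (intro compact_continuous_image) auto
  then obtain B0 where B0: "\<And>s. s \<in> {a..b} \<Longrightarrow> \<bar>D 1 s\<bar> \<le> B0"
    using compact_imp_bounded[of "D 1 ` {a..b}"] unfolding bounded_real by (meson imageI)
  define B where "B = max B0 0"
  have cp: "continuous_on {a..b} p"
    unfolding continuous_on_eq_continuous_within
    using DD[of _ 0] DERIV_continuous D0 by fastforce
  have "lipr B {a..b} p"
    unfolding lipr_def
  proof (intro ballI impI)
    fix x y assume xy: "x \<in> {a..b}" "y \<in> {a..b}" "x \<le> y"
    have "norm (p y - p x) \<le> B * y - B * x"
    proof (rule incr_bound[where f' = "D 1" and g' = "\<lambda>r. B"])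
      show "x \<le> y" by fact
      show "continuous_on {x..y} p" using xy by (intro continuous_on_subset[OF cp]) auto
      show "continuous_on {x..y} (\<lambda>s. B * s)" by (intro continuous_intros)
      fix r assume r: "x < r" "r < y"
      then have "a < r" "r < b" using xy by auto
      then show "(p has_vector_derivative D 1 r) (at r)"
        using DD[of r 0] D0 by (simp add: at_within_Icc_at has_real_derivative_iff_has_vector_derivative)
      show "((\<lambda>s. B * s) has_real_derivative B) (at r)" by (auto intro!: derivative_eq_intros)
      show "norm (D 1 r) \<le> B" using B0[of r] \<open>a < r\<close> \<open>r < b\<close> by (simp add: B_def)
    qed
    then show "\<bar>p y - p x\<bar> \<le> B * (y - x)" by (simp add: algebra_simps)
  qed
  then show ?thesis by (intro exI[of _ B]) (auto simp: B_def)
qed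

lemma p_lip: "\<exists>L. \<forall>s\<ge>0. \<forall>s'\<ge>0. \<bar>p s - p s'\<bar> \<le> L * \<bar>s - s'\<bar>"
proof -
  obtain B where B: "B \<ge> 0" "lipr B {a..b} p" using lip_mid by blast
  define L where "L = B + \<alpha> * b powr (-\<alpha> - 1)"
  have L: "B \<le> L" "\<alpha> * b powr (-\<alpha> - 1) \<le> L" "0 \<le> L" using B alpha by (auto simp: L_def)
  have "lipr L {a..} p"
    using lipr_join[of a b L p] ab lipr_mono[OF B(2) L(1)] lipr_mono[OF lip_far L(2)] by auto
  then have "lipr L {0..} p"
    using lipr_join[of 0 a L p] ab lip_near[OF L(3)] by auto
  then have *: "\<bar>p y - p x\<bar> \<le> L * (y - x)" if "0 \<le> x" "x \<le> y" for x y
    using that unfolding lipr_def by auto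
  show ?thesis
  proof (intro exI[of _ L] allI impI)
    fix s s' :: real assume "0 \<le> s" "0 \<le> s'"
    then show "\<bar>p s - p s'\<bar> \<le> L * \<bar>s - s'\<bar>"
      using *[of s s'] *[of s' s] by (cases "s \<le> s'") (auto simp: abs_minus_commute)
  qed
qed

end


lemma cont_of_deriv:
  assumes "\<And>s. s \<in> S \<Longrightarrow> (f has_vector_derivative f' s) (at s within S)"
  shows "continuous_on S f"
  unfolding continuous_on_eq_continuous_within
  using assms has_vector_derivative_continuous by blast

lemma deriv_interior:
  fixes T r :: real
  assumes "(f has_vector_derivative D) (at r within {0..T})" "0 < r" "r < T"
  shows "(f has_vector_derivative D) (at r)"
  using assms by (simp add: at_within_Icc_at)

lemma sym_sum_nonpos:
  fixes w :: "nat \<Rightarrow> nat \<Rightarrow> real" and u :: "nat \<Rightarrow> 'a::real_inner"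
  assumes sym: "\<And>i k. w i k = w k i" and nn: "\<And>i k. 0 \<le> w i k"
  shows "(\<Sum>i<N. \<Sum>k<N. w i k * inner (u i) (u k - u i)) \<le> 0"
proof -
  let ?S = "(\<Sum>i<N. \<Sum>k<N. w i k * inner (u i) (u k - u i))"
  have "?S = (\<Sum>k<N. \<Sum>i<N. w i k * inner (u i) (u k - u i))" by (rule sum.swap)
  also have "\<dots> = (\<Sum>i<N. \<Sum>k<N. w i k * inner (u k) (u i - u k))"
    using sym by simp
  finally have eq: "?S = (\<Sum>i<N. \<Sum>k<N. w i k * inner (u k) (u i - u k))" .
  have "?S + ?S = ?S + (\<Sum>i<N. \<Sum>k<N. w i k * inner (u k) (u i - u k))" using eq by simp
  also have "\<dots> = (\<Sum>i<N. \<Sum>k<N. w i k * (inner (u i) (u k - u i) + inner (u k) (u i - u k)))"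
    by (simp add: sum.distrib[symmetric] distrib_left)
  also have "\<dots> = (\<Sum>i<N. \<Sum>k<N. - (w i k * inner (u k - u i) (u k - u i)))"
    by (intro sum.cong refl) (simp add: inner_diff_left inner_diff_right inner_commute algebra_simps)
  also have "\<dots> \<le> 0"
    by (intro sum_nonpos) (simp add: nn)
  finally show ?thesis by simp
qed

locale sys =
  fixes N :: nat and T :: real and psi :: "real \<Rightarrow> real" and L :: real
    and x v :: "nat \<Rightarrow> real \<Rightarrow> 'a::real_inner"
  assumes T: "T > 0" and N: "N \<ge> 1"
    and psi_nn: "\<And>s. 0 \<le> s \<Longrightarrow> 0 \<le> psi s"
    and psi_lip: "\<And>s s'. 0 \<le> s \<Longrightarrow> 0 \<le> s' \<Longrightarrow> \<bar>psi s - psi s'\<bar> \<le> L * \<bar>s - s'\<bar>"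
    and ode_x: "\<And>i s. i < N \<Longrightarrow> s \<in> {0..T} \<Longrightarrow>
          (x i has_vector_derivative v i s) (at s within {0..T})"
    and ode_v: "\<And>i s. i < N \<Longrightarrow> s \<in> {0..T} \<Longrightarrow>
          (v i has_vector_derivative
             (1 / real N) *\<^sub>R (\<Sum>k<N. psi (norm (x i s - x k s)) *\<^sub>R (v k s - v i s)))
          (at s within {0..T})"
begin

definition F where "F i s = (1 / real N) *\<^sub>R (\<Sum>k<N. psi (norm (x i s - x k s)) *\<^sub>R (v k s - v i s))"

lemma ode_v': "i < N \<Longrightarrow> s \<in> {0..T} \<Longrightarrow> (v i has_vector_derivative F i s) (at s within {0..T})"
  unfolding F_def by (rule ode_v)

lemma cont_x: "i < N \<Longrightarrow> continuous_on {0..T} (x i)"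
  by (rule cont_of_deriv[OF ode_x])
lemma cont_v: "i < N \<Longrightarrow> continuous_on {0..T} (v i)"
  by (rule cont_of_deriv[OF ode_v'])

definition E where "E s = (\<Sum>i<N. inner (v i s) (v i s))"

lemma F_energy: "(\<Sum>i<N. inner (v i s) (F i s)) \<le> 0"
proof -
  have "(\<Sum>i<N. inner (v i s) (F i s)) =
      (1 / real N) * (\<Sum>i<N. \<Sum>k<N. psi (norm (x i s - x k s)) * inner (v i s) (v k s - v i s))"
    by (simp add: F_def inner_sum_right sum_distrib_left)
  also have "\<dots> \<le> 0"
    by (intro mult_nonneg_nonpos sym_sum_nonpos) (auto simp: psi_nn norm_minus_commute)
  finally show ?thesis .
qed

lemma E_deriv: "s \<in> {0..T} \<Longrightarrow>
   (E has_vector_derivative (\<Sum>i<N. inner (v i s) (F i s) + inner (F i s) (v i s))) (at s within {0..T})"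
proof -
  assume s: "s \<in> {0..T}"
  have "((\<lambda>s. \<Sum>i<N. inner (v i s) (v i s)) has_vector_derivative
      (\<Sum>i<N. inner (v i s) (F i s) + inner (F i s) (v i s))) (at s within {0..T})"
    by (intro has_vector_derivative_sum bounded_bilinear.has_vector_derivative[OF bounded_bilinear_inner]
      ode_v' s) auto
  moreover have "E = (\<lambda>s. \<Sum>i<N. inner (v i s) (v i s))" by (simp add: E_def[abs_def])
  ultimately show ?thesis by simp
qed

lemma E_decr: "s \<in> {0..T} \<Longrightarrow> E s \<le> E 0"
proof -
  assume s: "s \<in> {0..T}"
  show ?thesis
  proof (rule DERIV_nonpos_imp_decreasing_open[of 0 s E])
    show "0 \<le> s" using s by simp
    fix r assume r: "0 < r" "r < s"
    have "(E has_vector_derivative (\<Sum>i<N. inner (v i r) (F i r) + inner (F i r) (v i r))) (at r)"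
      by (rule deriv_interior[OF E_deriv]) (use r s in auto)
    moreover have "(\<Sum>i<N. inner (v i r) (F i r) + inner (F i r) (v i r)) \<le> 0"
    proof -
      have "(\<Sum>i<N. inner (v i r) (F i r) + inner (F i r) (v i r)) = 2 * (\<Sum>i<N. inner (v i r) (F i r))"
        by (simp add: inner_commute sum_distrib_left)
      then show ?thesis using F_energy[of r] by simp
    qed
    ultimately show "\<exists>y. (E has_real_derivative y) (at r) \<and> y \<le> 0"
      unfolding has_real_derivative_iff_has_vector_derivative by blast
  next
    have "continuous_on {0..T} E"
    proof (rule cont_of_deriv)
      fix s :: real assume "s \<in> {0..T}"
      then show "(E has_vector_derivative (\<Sum>i<N. inner (v i s) (F i s) + inner (F i s) (v i s))) (at s within {0..T})"
        by (rule E_deriv)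
    qed
    then show "continuous_on {0..s} E" by (rule continuous_on_subset) (use s in auto)
  qed
qed

definition "V = sqrt (E 0)"

lemma v_bound: "i < N \<Longrightarrow> s \<in> {0..T} \<Longrightarrow> norm (v i s) \<le> V"
proof -
  assume i: "i < N" and s: "s \<in> {0..T}"
  have "inner (v i s) (v i s) \<le> E s"
    unfolding E_def using i by (intro member_le_sum) auto
  then have "(norm (v i s))^2 \<le> E 0" using E_decr[OF s] by (simp add: power2_norm_eq_inner)
  then show ?thesis unfolding V_def by (rule real_le_rsqrt)
qed

lemma V_nn: "0 \<le> V" unfolding V_def E_def by (simp add: sum_nonneg)

lemma L_nn: "0 \<le> L"
  using psi_lip[of 0 1] by simp

end


context sys begin

lemma pair_term:
  assumes i: "i < N" and k: "k < N" and j: "j < N" and r: "r \<in> {0..T}"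
  shows "psi (norm (x i r - x j r)) * inner (v i r - v k r) (v j r - v i r)
       - psi (norm (x k r - x j r)) * inner (v i r - v k r) (v j r - v k r)
       \<le> 2 * L * V * norm (x i r - x k r) * norm (v i r - v k r)"
proof -
  define a where "a = psi (norm (x i r - x j r))"
  define b where "b = psi (norm (x k r - x j r))"
  define d where "d = v i r - v k r"
  define w where "w = v j r - v k r"
  have e: "a * inner d (v j r - v i r) - b * inner d w = (a - b) * inner d w - a * inner d d"
    unfolding d_def w_def by (simp add: inner_diff_right algebra_simps)
  have a0: "0 \<le> a" unfolding a_def by (rule psi_nn) simp
  have "0 \<le> a * inner d d" using a0 by simp
  have ab: "\<bar>a - b\<bar> \<le> L * norm (x i r - x k r)"
  proof -
    have "\<bar>a - b\<bar> \<le> L * \<bar>norm (x i r - x j r) - norm (x k r - x j r)\<bar>"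
      unfolding a_def b_def by (rule psi_lip) auto
    also have "\<bar>norm (x i r - x j r) - norm (x k r - x j r)\<bar> \<le> norm ((x i r - x j r) - (x k r - x j r))"
      by (rule norm_triangle_ineq3)
    then have "L * \<bar>norm (x i r - x j r) - norm (x k r - x j r)\<bar> \<le> L * norm (x i r - x k r)"
      using L_nn by (intro mult_left_mono) auto
    finally show ?thesis .
  qed
  have wb: "norm w \<le> 2 * V"
  proof -
    have "norm w \<le> norm (v j r) + norm (v k r)" unfolding w_def by (rule norm_triangle_ineq4)
    also have "\<dots> \<le> V + V" using v_bound[OF j r] v_bound[OF k r] by simp
    finally show ?thesis by simp
  qed
  have "(a - b) * inner d w \<le> \<bar>a - b\<bar> * \<bar>inner d w\<bar>" by (simp add: abs_mult[symmetric])
  also have "\<dots> \<le> (L * norm (x i r - x k r)) * (norm d * (2 * V))"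
  proof (rule mult_mono)
    show "\<bar>inner d w\<bar> \<le> norm d * (2 * V)"
      using Cauchy_Schwarz_ineq2[of d w] wb by (meson mult_left_mono norm_ge_zero order_trans)
  qed (use ab L_nn in auto)
  finally have "(a - b) * inner d w \<le> 2 * L * V * norm (x i r - x k r) * norm d" by (simp add: algebra_simps)
  then show ?thesis using e \<open>0 \<le> a * inner d d\<close> unfolding a_def b_def d_def w_def by linarith
qed

lemma F_diff_ineq:
  assumes i: "i < N" and k: "k < N" and r: "r \<in> {0..T}"
  shows "inner (v i r - v k r) (F i r - F k r) \<le> 2 * L * V * norm (x i r - x k r) * norm (v i r - v k r)"
proof -
  have "inner (v i r - v k r) (F i r - F k r) = (1 / real N) * (\<Sum>j<N.
      psi (norm (x i r - x j r)) * inner (v i r - v k r) (v j r - v i r)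
       - psi (norm (x k r - x j r)) * inner (v i r - v k r) (v j r - v k r))"
    by (simp add: F_def inner_diff_right inner_sum_right sum_subtractf right_diff_distrib)
  also have "\<dots> \<le> (1 / real N) * (\<Sum>j<N. 2 * L * V * norm (x i r - x k r) * norm (v i r - v k r))"
    by (intro mult_left_mono sum_mono pair_term i k r) auto
  also have "\<dots> = 2 * L * V * norm (x i r - x k r) * norm (v i r - v k r)"
    using N by simp
  finally show ?thesis .
qed

lemma cluster:
  assumes i: "i < N" and k: "k < N" and x0: "x i 0 = x k 0" and v0: "v i 0 = v k 0"
    and s: "s \<in> {0..T}"
  shows "v i s = v k s"
proof -
  define dx where "dx r = x i r - x k r" for r
  define dv where "dv r = v i r - v k r" for r
  define q where "q r = inner (dx r) (dx r) + inner (dv r) (dv r)" for r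
  define q' where "q' r = 2 * inner (dx r) (dv r) + 2 * inner (dv r) (F i r - F k r)" for r
  define K where "K = 1 + 2 * L * V"
  have K0: "0 \<le> K" using L_nn V_nn by (simp add: K_def)
  have dq: "(q has_real_derivative q' r) (at r within {0..T})" if r: "r \<in> {0..T}" for r
  proof -
    have ddx: "(dx has_vector_derivative dv r) (at r within {0..T})"
      unfolding dx_def[abs_def] dv_def by (intro has_vector_derivative_diff ode_x i k r)
    have ddv: "(dv has_vector_derivative (F i r - F k r)) (at r within {0..T})"
      unfolding dv_def[abs_def] by (intro has_vector_derivative_diff ode_v' i k r)
    have "(q has_vector_derivative
        ((inner (dx r) (dv r) + inner (dv r) (dx r)) + (inner (dv r) (F i r - F k r) + inner (F i r - F k r) (dv r))))
        (at r within {0..T})"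
      unfolding q_def[abs_def]
      by (intro has_vector_derivative_add bounded_bilinear.has_vector_derivative[OF bounded_bilinear_inner] ddx ddv)
    then show ?thesis
      unfolding has_real_derivative_iff_has_vector_derivative
      by (rule has_vector_derivative_eq_rhs) (simp add: q'_def inner_commute)
  qed
  have q'le: "q' r \<le> K * q r" if r: "r \<in> {0..T}" for r
  proof -
    have "inner (dx r) (dv r) \<le> norm (dx r) * norm (dv r)" by (rule norm_cauchy_schwarz)
    moreover have "inner (dv r) (F i r - F k r) \<le> 2 * L * V * norm (dx r) * norm (dv r)"
      unfolding dx_def dv_def by (rule F_diff_ineq[OF i k r])
    ultimately have "q' r \<le> K * (2 * norm (dx r) * norm (dv r))"
      by (simp add: q'_def K_def algebra_simps)
    also have "2 * norm (dx r) * norm (dv r) \<le> (norm (dx r))^2 + (norm (dv r))^2"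
      using sum_squares_bound[of "norm (dx r)" "norm (dv r)"] by simp
    then have "K * (2 * norm (dx r) * norm (dv r)) \<le> K * ((norm (dx r))^2 + (norm (dv r))^2)"
      using K0 by (intro mult_left_mono)
    finally show ?thesis by (simp add: q_def power2_norm_eq_inner)
  qed
  define h where "h r = exp (- K * r) * q r" for r
  have dh: "(h has_real_derivative (exp (- K * r) * (q' r - K * q r))) (at r within {0..T})"
    if r: "r \<in> {0..T}" for r
    unfolding h_def[abs_def]
    by (rule derivative_eq_intros dq r refl | simp)+ (simp add: algebra_simps)
  have "h s \<le> h 0"
  proof (rule DERIV_nonpos_imp_decreasing_open[of 0 s h])
    show "0 \<le> s" using s by simp
    fix r assume r: "0 < r" "r < s"
    then have rT: "r \<in> {0..T}" "0 < r" "r < T" using s by auto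
    have "(h has_real_derivative (exp (- K * r) * (q' r - K * q r))) (at r)"
      using dh[OF rT(1)] rT by (simp add: at_within_Icc_at)
    moreover have "exp (- K * r) * (q' r - K * q r) \<le> 0"
      using q'le[OF rT(1)] by (simp add: mult_nonneg_nonpos)
    ultimately show "\<exists>y. (h has_real_derivative y) (at r) \<and> y \<le> 0" by blast
  next
    have "continuous_on {0..T} h"
      unfolding continuous_on_eq_continuous_within using dh DERIV_continuous by blast
    then show "continuous_on {0..s} h" by (rule continuous_on_subset) (use s in auto)
  qed
  moreover have "h 0 = 0" using x0 v0 by (simp add: h_def q_def dx_def dv_def)
  ultimately have "exp (- K * s) * q s \<le> 0" by (simp add: h_def)
  then have "q s \<le> 0" by (simp add: mult_le_0_iff)
  then have "inner (dv s) (dv s) \<le> 0" unfolding q_def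
    using inner_ge_zero[of "dx s"] by linarith
  then have "dv s = 0" using inner_gt_zero_iff[of "dv s"] by linarith
  then show ?thesis by (simp add: dv_def)
qed

end


locale sys2 = sys N T psi L x v
  for N :: nat and T :: real and psi :: "real \<Rightarrow> real" and L :: real
    and x v :: "nat \<Rightarrow> real \<Rightarrow> 'a::real_inner" +
  fixes \<alpha> c d W t :: real and x0 v0 :: "nat \<Rightarrow> 'a"
  assumes alpha: "0 < \<alpha>" "\<alpha> < 1"
    and psi_bd: "\<And>s. 0 < s \<Longrightarrow> psi s \<le> 2 * s powr (-\<alpha>)"
    and x0: "\<And>i. i < N \<Longrightarrow> x i 0 = x0 i" and v0: "\<And>i. i < N \<Longrightarrow> v i 0 = v0 i"
    and c: "c > 0" "\<And>i k. i < N \<Longrightarrow> k < N \<Longrightarrow> v0 i \<noteq> v0 k \<Longrightarrow> c \<le> norm (v0 i - v0 k)"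
    and d: "d > 0" "\<And>i k. i < N \<Longrightarrow> k < N \<Longrightarrow> x0 i \<noteq> x0 k \<Longrightarrow> d \<le> norm (x0 i - x0 k)"
    and W: "W > 0" "V \<le> W"
    and t: "0 < t" "t \<le> T" "t \<le> 1" "4 * W * t \<le> d"
      "4 * W * ((d/2) powr (-\<alpha>) + (c/2) powr (-\<alpha>)) / (1 - \<alpha>) * t powr (1 - \<alpha>) \<le> c / 8"
begin

definition "K = 4 * W * ((d/2) powr (-\<alpha>) + (c/2) powr (-\<alpha>))"
definition "G r = K / (1 - \<alpha>) * r powr (1 - \<alpha>)"

lemma K0: "0 \<le> K" using W by (simp add: K_def)

lemma vW: "i < N \<Longrightarrow> s \<in> {0..T} \<Longrightarrow> norm (v i s) \<le> W"
  using v_bound W by force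

lemma term_bd:
  assumes tau: "\<tau> \<le> t" and hyp: "\<forall>s\<in>{0..<\<tau>}. \<forall>i<N. norm (v i s - v0 i) \<le> c / 4"
    and r: "0 < r" "r < \<tau>" and i: "i < N" and k: "k < N"
  shows "psi (norm (x i r - x k r)) * norm (v k r - v i r) \<le> K * r powr (-\<alpha>)"
proof -
  have rT: "r \<in> {0..T}" "r \<le> 1" "r \<le> t" using r tau t by auto
  have rpow: "1 \<le> r powr (-\<alpha>)"
    using powr_mono2'[of "-\<alpha>" r 1] r rT alpha by simp
  have vd: "norm (v k r - v i r) \<le> 2 * W"
    using norm_triangle_ineq4[of "v k r" "v i r"] vW[OF k rT(1)] vW[OF i rT(1)] by linarith
  have psi0: "0 \<le> psi (norm (x i r - x k r))" by (rule psi_nn) simp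
  have sub: "{0..r} \<subseteq> {0..T}" using rT by auto
  have dint: "(f has_vector_derivative D) (at s)" if "(f has_vector_derivative D) (at s within {0..T})"
      "0 < s" "s < r" for f :: "real \<Rightarrow> 'a" and D s
    using that rT by (simp add: at_within_Icc_at)
  have key: "psi (norm (x i r - x k r)) \<le> 2 * m powr (-\<alpha>)"
    if "0 < m" "m \<le> norm (x i r - x k r)" for m
  proof -
    have "psi (norm (x i r - x k r)) \<le> 2 * (norm (x i r - x k r)) powr (-\<alpha>)"
      using that by (intro psi_bd) auto
    also have "\<dots> \<le> 2 * m powr (-\<alpha>)" using that alpha by (simp add: powr_mono2')
    finally show ?thesis .
  qed
  consider "x0 i = x0 k" "v0 i = v0 k" | "x0 i \<noteq> x0 k" | "x0 i = x0 k" "v0 i \<noteq> v0 k" by blast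
  then show ?thesis
  proof cases
    case 1
    then have "v i r = v k r" using cluster[OF i k _ _ rT(1)] x0 v0 i k by simp
    then show ?thesis using K0 by simp
  next
    case 2
    have "norm ((x i r - x k r) - (x i 0 - x k 0)) \<le> 2 * W * r - 2 * W * 0"
    proof (rule incr_bound[where f' = "\<lambda>s. v i s - v k s" and g' = "\<lambda>s. 2 * W"])
      show "0 \<le> r" using r by simp
      show "continuous_on {0..r} (\<lambda>s. x i s - x k s)"
        using continuous_on_subset[OF cont_x[OF i] sub] continuous_on_subset[OF cont_x[OF k] sub]
        by (intro continuous_intros)
      show "continuous_on {0..r} (\<lambda>s. 2 * W * s)" by (intro continuous_intros)
      fix s assume s: "0 < s" "s < r"
      have sT: "s \<in> {0..T}" using s rT by auto
      show "((\<lambda>s. x i s - x k s) has_vector_derivative v i s - v k s) (at s)"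
        using s by (intro dint has_vector_derivative_diff ode_x i k sT)
      show "((\<lambda>s. 2 * W * s) has_real_derivative 2 * W) (at s)" by (auto intro!: derivative_eq_intros)
      show "norm (v i s - v k s) \<le> 2 * W"
        using norm_triangle_ineq4[of "v i s" "v k s"] vW[OF k sT] vW[OF i sT] by linarith
    qed
    also have "\<dots> \<le> d / 2"
    proof -
      have "W * r \<le> W * t" using W rT by (intro mult_left_mono) auto
      then show ?thesis using t by linarith
    qed
    finally have A: "norm ((x i r - x k r) - (x i 0 - x k 0)) \<le> d / 2" .
    have "d \<le> norm (x i 0 - x k 0)" using d(2)[OF i k 2] x0 i k by simp
    then have dist: "d / 2 \<le> norm (x i r - x k r)"
      using A norm_triangle_ineq2[of "x i 0 - x k 0" "x i r - x k r"] by (simp add: norm_minus_commute)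
    have "psi (norm (x i r - x k r)) * norm (v k r - v i r) \<le> (2 * (d/2) powr (-\<alpha>)) * (2 * W)"
      using key[OF _ dist] d vd psi0 by (intro mult_mono) auto
    also have "\<dots> \<le> (4 * W * (d/2) powr (-\<alpha>)) * r powr (-\<alpha>)"
    proof -
      have "0 \<le> 4*W*(d/2) powr (-\<alpha>)" using W by simp
      then have "(4*W*(d/2) powr(-\<alpha>)) * 1 \<le> (4*W*(d/2) powr(-\<alpha>)) * r powr (-\<alpha>)"
        by (rule mult_left_mono[OF rpow])
      then show ?thesis by (simp add: algebra_simps)
    qed
    also have "\<dots> \<le> K * r powr (-\<alpha>)"
      unfolding K_def using W by (intro mult_right_mono) (auto simp: algebra_simps)
    finally show ?thesis .
  next
    case 3
    have "norm ((x i r - x k r - r *\<^sub>R (v0 i - v0 k)) - (x i 0 - x k 0 - 0 *\<^sub>R (v0 i - v0 k)))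
        \<le> c / 2 * r - c / 2 * 0"
    proof (rule incr_bound[where f = "\<lambda>s. x i s - x k s - s *\<^sub>R (v0 i - v0 k)"
          and f' = "\<lambda>s. (v i s - v k s) - (v0 i - v0 k)" and g' = "\<lambda>s. c / 2"])
      show "0 \<le> r" using r by simp
      show "continuous_on {0..r} (\<lambda>s. x i s - x k s - s *\<^sub>R (v0 i - v0 k))"
        using continuous_on_subset[OF cont_x[OF i] sub] continuous_on_subset[OF cont_x[OF k] sub]
        by (intro continuous_intros)
      show "continuous_on {0..r} (\<lambda>s. c / 2 * s)" by (intro continuous_intros)
      fix s assume s: "0 < s" "s < r"
      have sT: "s \<in> {0..T}" using s rT by auto
      have "((\<lambda>s. x i s - x k s - s *\<^sub>R (v0 i - v0 k)) has_vector_derivative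
          v i s - v k s - 1 *\<^sub>R (v0 i - v0 k)) (at s within {0..T})"
      proof (intro has_vector_derivative_diff ode_x i k sT)
        show "((\<lambda>s. s *\<^sub>R (v0 i - v0 k)) has_vector_derivative 1 *\<^sub>R (v0 i - v0 k)) (at s within {0..T})"
          by (rule has_vector_derivative_eq_rhs[OF has_vector_derivative_scaleR[OF DERIV_ident has_vector_derivative_const]]) simp
      qed
      then show "((\<lambda>s. x i s - x k s - s *\<^sub>R (v0 i - v0 k)) has_vector_derivative
          (v i s - v k s) - (v0 i - v0 k)) (at s)"
        using s by (intro dint) auto
      show "((\<lambda>s. c / 2 * s) has_real_derivative c / 2) (at s)" by (auto intro!: derivative_eq_intros)
      have h1: "norm (v i s - v0 i) \<le> c / 4" "norm (v k s - v0 k) \<le> c / 4"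
        using hyp s r i k by auto
      have "norm ((v i s - v k s) - (v0 i - v0 k)) \<le> norm (v i s - v0 i) + norm (v k s - v0 k)"
        using norm_triangle_ineq4[of "v i s - v0 i" "v k s - v0 k"] by (simp add: algebra_simps)
      then show "norm ((v i s - v k s) - (v0 i - v0 k)) \<le> c / 2" using h1 by linarith
    qed
    then have A: "norm ((x i r - x k r) - r *\<^sub>R (v0 i - v0 k)) \<le> c / 2 * r"
      using x0 i k 3 by simp
    have "c \<le> norm (v0 i - v0 k)" using c(2)[OF i k 3(2)] .
    then have "c * r \<le> norm (r *\<^sub>R (v0 i - v0 k))" using r by (simp add: mult_right_mono mult.commute)
    then have dist: "c / 2 * r \<le> norm (x i r - x k r)"
      using A norm_triangle_ineq2[of "r *\<^sub>R (v0 i - v0 k)" "x i r - x k r"] by (simp add: norm_minus_commute)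
    have cr: "0 < c / 2 * r" using c r by simp
    have "psi (norm (x i r - x k r)) * norm (v k r - v i r) \<le> (2 * (c / 2 * r) powr (-\<alpha>)) * (2 * W)"
      using key[OF cr dist] vd psi0 by (intro mult_mono) auto
    also have "\<dots> = (4 * W * (c/2) powr (-\<alpha>)) * r powr (-\<alpha>)"
    proof -
      have "(c / 2 * r) powr (-\<alpha>) = (c/2) powr (-\<alpha>) * r powr (-\<alpha>)"
        using c r by (intro powr_mult)
      then show ?thesis by simp
    qed
    also have "\<dots> \<le> K * r powr (-\<alpha>)"
      unfolding K_def using W by (intro mult_right_mono) (auto simp: algebra_simps)
    finally show ?thesis .
  qed
qed

lemma F_bd:
  assumes tau: "\<tau> \<le> t" and hyp: "\<forall>s\<in>{0..<\<tau>}. \<forall>i<N. norm (v i s - v0 i) \<le> c / 4"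
    and r: "0 < r" "r < \<tau>" and i: "i < N"
  shows "norm (F i r) \<le> K * r powr (-\<alpha>)"
proof -
  have "norm (F i r) = (1 / real N) * norm (\<Sum>k<N. psi (norm (x i r - x k r)) *\<^sub>R (v k r - v i r))"
    by (simp add: F_def)
  also have "\<dots> \<le> (1 / real N) * (\<Sum>k<N. norm (psi (norm (x i r - x k r)) *\<^sub>R (v k r - v i r)))"
    by (intro mult_left_mono norm_sum) auto
  also have "\<dots> \<le> (1 / real N) * (\<Sum>k<N. K * r powr (-\<alpha>))"
  proof (intro mult_left_mono sum_mono)
    fix k assume "k \<in> {..<N}"
    then have k: "k < N" by simp
    have p0: "0 \<le> psi (norm (x i r - x k r))" by (rule psi_nn) simp
    have "norm (psi (norm (x i r - x k r)) *\<^sub>R (v k r - v i r)) = psi (norm (x i r - x k r)) * norm (v k r - v i r)"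
      by (simp add: abs_of_nonneg[OF p0])
    then show "norm (psi (norm (x i r - x k r)) *\<^sub>R (v k r - v i r)) \<le> K * r powr (-\<alpha>)"
      using term_bd[OF tau hyp r i k] by linarith
  qed simp
  also have "\<dots> = K * r powr (-\<alpha>)" using N by simp
  finally show ?thesis .
qed

lemma G_cont: "continuous_on {a..b} G" if "0 \<le> a" for a b
  unfolding G_def[abs_def] using that alpha
  by (intro continuous_intros continuous_on_powr') auto

lemma incr_G:
  assumes tau: "\<tau> \<le> t" and hyp: "\<forall>s\<in>{0..<\<tau>}. \<forall>i<N. norm (v i s - v0 i) \<le> c / 4"
    and i: "i < N" and ss: "0 \<le> s'" "s' \<le> s" "s \<le> \<tau>"
  shows "norm (v i s - v i s') \<le> G s - G s'"
proof (rule incr_bound[where f' = "F i" and g' = "\<lambda>r. K * r powr (-\<alpha>)"])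
  show "s' \<le> s" by fact
  show "continuous_on {s'..s} (v i)"
    using ss tau t by (intro continuous_on_subset[OF cont_v[OF i]]) auto
  show "continuous_on {s'..s} G" by (rule G_cont) fact
  fix r assume r: "s' < r" "r < s"
  then have r0: "0 < r" "r < T" using ss tau t by auto
  show "(v i has_vector_derivative F i r) (at r)"
    using ode_v'[OF i, of r] r0 by (simp add: at_within_Icc_at)
  have d1: "((\<lambda>r. K/(1-\<alpha>) * r powr (1-\<alpha>)) has_real_derivative K/(1-\<alpha>) * ((1-\<alpha>) * r powr (1-\<alpha>-1))) (at r)"
    by (intro DERIV_cmult has_real_derivative_powr) (use r0 in auto)
  have eq: "K/(1-\<alpha>) * ((1-\<alpha>) * r powr (1-\<alpha>-1)) = K * r powr (-\<alpha>)" using alpha by simp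
  from d1 show "(G has_real_derivative K * r powr (-\<alpha>)) (at r)"
    unfolding G_def[abs_def] by (simp only: eq)
  show "norm (F i r) \<le> K * r powr (-\<alpha>)"
    by (rule F_bd[OF tau hyp]) (use r ss i in auto)
qed

lemma claim: "\<forall>s\<in>{0..t}. \<forall>i<N. norm (v i s - v0 i) \<le> c / 4"
proof (rule ccontr)
  assume neg: "\<not> ?thesis"
  define B where "B = (\<Union>i\<in>{..<N}. {0..t} \<inter> (\<lambda>s. norm (v i s - v0 i)) -` {c/4..})"
  have Bne: "B \<noteq> {}" using neg unfolding B_def by force
  have Bsub: "B \<subseteq> {0..t}" unfolding B_def by auto
  have Bcl: "closed B" unfolding B_def
  proof (intro closed_UN ballI)
    fix i assume "i \<in> {..<N}"
    then have i: "i < N" by simp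
    have "continuous_on {0..t} (\<lambda>s. norm (v i s - v0 i))"
      using t by (intro continuous_intros continuous_on_subset[OF cont_v[OF i]]) auto
    then show "closed ({0..t} \<inter> (\<lambda>s. norm (v i s - v0 i)) -` {c / 4..})"
      by (intro continuous_closed_preimage) auto
  qed simp
  have bb: "bdd_below B" using Bsub by (meson atLeastAtMost_iff bdd_below.I subsetD)
  define \<tau> where "\<tau> = Inf B"
  have tB: "\<tau> \<in> B" unfolding \<tau>_def using closed_contains_Inf[OF Bne bb Bcl] .
  then have tau: "0 \<le> \<tau>" "\<tau> \<le> t" using Bsub by auto
  have hyp: "\<forall>s\<in>{0..<\<tau>}. \<forall>i<N. norm (v i s - v0 i) \<le> c / 4"
  proof (intro ballI allI impI)
    fix s i assume s: "s \<in> {0..<\<tau>}" and i: "i < N"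
    show "norm (v i s - v0 i) \<le> c / 4"
    proof (rule ccontr)
      assume "\<not> ?thesis"
      then have "s \<in> B" unfolding B_def using s i tau by (intro UN_I[of i]) auto
      then have "\<tau> \<le> s" unfolding \<tau>_def by (rule cInf_lower[OF _ bb])
      then show False using s by simp
    qed
  qed
  obtain i where i: "i < N" and bad: "c / 4 \<le> norm (v i \<tau> - v0 i)"
    using tB unfolding B_def by auto
  have "norm (v i \<tau> - v i 0) \<le> G \<tau> - G 0"
    by (rule incr_G[OF tau(2) hyp i]) (use tau in auto)
  also have "\<dots> = G \<tau>" by (simp add: G_def)
  also have "\<dots> \<le> G t"
    unfolding G_def using tau alpha K0
    by (intro mult_left_mono powr_mono2) auto
  also have "\<dots> \<le> c / 8" using t(5) by (simp add: G_def K_def)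
  finally have "norm (v i \<tau> - v0 i) \<le> c / 8" using v0[OF i] by simp
  then show False using bad c by linarith
qed

lemma holder:
  assumes i: "i < N" and s: "s \<in> {0..t}" and s': "s' \<in> {0..t}"
  shows "norm (v i s - v i s') \<le> K / (1 - \<alpha>) * \<bar>s - s'\<bar> powr (1 - \<alpha>)"
proof -
  have hyp: "\<forall>s\<in>{0..<t}. \<forall>i<N. norm (v i s - v0 i) \<le> c / 4" using claim by auto
  have gen: "norm (v i b - v i a) \<le> K / (1 - \<alpha>) * (b - a) powr (1 - \<alpha>)"
    if ab: "0 \<le> a" "a \<le> b" "b \<le> t" for a b
  proof -
    have "norm (v i b - v i a) \<le> G b - G a" by (rule incr_G[OF order_refl hyp i ab])
    also have "\<dots> = K / (1 - \<alpha>) * (b powr (1 - \<alpha>) - a powr (1 - \<alpha>))"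
      by (simp add: G_def algebra_simps)
    also have "\<dots> \<le> K / (1 - \<alpha>) * (b - a) powr (1 - \<alpha>)"
      using K0 alpha ab by (intro mult_left_mono powr_diff_le) auto
    finally show ?thesis .
  qed
  show ?thesis
  proof (cases "s' \<le> s")
    case True then show ?thesis using gen[of s' s] s s' by simp
  next
    case False then show ?thesis using gen[of s s'] s s' by (simp add: norm_minus_commute abs_minus_commute)
  qed
qed

end


lemma exists_sep:
  fixes u :: "nat \<Rightarrow> 'a::real_normed_vector"
  shows "\<exists>c>0. \<forall>i<N. \<forall>k<N. u i \<noteq> u k \<longrightarrow> c \<le> norm (u i - u k)"
proof -
  define P where "P = {p \<in> {..<N} \<times> {..<N}. u (fst p) \<noteq> u (snd p)}"
  define S where "S = (\<lambda>p. norm (u (fst p) - u (snd p))) ` P"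
  have "finite P" unfolding P_def by simp
  then have fin: "finite S" unfolding S_def by (rule finite_imageI)
  have pos: "\<forall>y\<in>S. 0 < y" unfolding S_def P_def by auto
  define c where "c = Min (insert 1 S)"
  have "c \<in> insert 1 S" unfolding c_def using fin by (intro Min_in) simp_all
  then have "c > 0" using pos by auto
  moreover have "c \<le> norm (u i - u k)" if "i<N" "k<N" "u i \<noteq> u k" for i k
  proof -
    have "(i,k) \<in> P" unfolding P_def using that by simp
    then have "norm (u i - u k) \<in> S" unfolding S_def by (rule rev_image_eqI) simp
    then show ?thesis unfolding c_def using fin by (intro Min_le) simp_all
  qed
  ultimately show ?thesis by blast
qed

theorem lemma2p1:
  fixes N :: nat and T \<alpha> :: real
    and psi :: "nat \<Rightarrow> real \<Rightarrow> real"
    and x0 v0 :: "nat \<Rightarrow> real ^ 'd"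
    and x v :: "nat \<Rightarrow> nat \<Rightarrow> real \<Rightarrow> real ^ 'd"
  assumes N: "N \<ge> 1" and T: "T > 0"
    and alpha: "0 < \<alpha>" "\<alpha> < 1"
    and psi_far: "\<And>n s. n \<ge> 2 \<Longrightarrow> s \<ge> (real n - 1) powr (- 1 / \<alpha>) \<Longrightarrow> psi n s = s powr (- \<alpha>)"
    and psi_near: "\<And>n s. n \<ge> 2 \<Longrightarrow> 0 \<le> s \<Longrightarrow> s \<le> real n powr (- 1 / \<alpha>) \<Longrightarrow> psi n s = real n"
    and psi_smooth: "\<And>n. n \<ge> 2 \<Longrightarrow>
          smooth_on {real n powr (- 1 / \<alpha>) .. (real n - 1) powr (- 1 / \<alpha>)} (psi n)"
    and psi_mono: "\<And>n. n \<ge> 2 \<Longrightarrow>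
          antimono_on {real n powr (- 1 / \<alpha>) .. (real n - 1) powr (- 1 / \<alpha>)} (psi n)"
    and init_x: "\<And>n i. n \<ge> 2 \<Longrightarrow> i < N \<Longrightarrow> x n i 0 = x0 i"
    and init_v: "\<And>n i. n \<ge> 2 \<Longrightarrow> i < N \<Longrightarrow> v n i 0 = v0 i"
    and ode_x: "\<And>n i s. n \<ge> 2 \<Longrightarrow> i < N \<Longrightarrow> s \<in> {0..T} \<Longrightarrow>
          (x n i has_vector_derivative v n i s) (at s within {0..T})"
    and ode_v: "\<And>n i s. n \<ge> 2 \<Longrightarrow> i < N \<Longrightarrow> s \<in> {0..T} \<Longrightarrow>
          (v n i has_vector_derivative
             (1 / real N) *\<^sub>R (\<Sum>k<N. psi n (norm (x n i s - x n k s)) *\<^sub>R (v n k s - v n i s)))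
          (at s within {0..T})"
  shows "\<exists>t>0. t \<le> T \<and> (\<exists>\<gamma> C. 0 < \<gamma> \<and> \<gamma> \<le> 1 \<and>
           (\<forall>n\<ge>2. \<forall>i<N. \<forall>s\<in>{0..t}. \<forall>s'\<in>{0..t}.
              norm (v n i s - v n i s') \<le> C * \<bar>s - s'\<bar> powr \<gamma>))"
proof -
  obtain c where c: "c > 0" "\<forall>i<N. \<forall>k<N. v0 i \<noteq> v0 k \<longrightarrow> c \<le> norm (v0 i - v0 k)"
    using exists_sep by blast
  obtain d where d: "d > 0" "\<forall>i<N. \<forall>k<N. x0 i \<noteq> x0 k \<longrightarrow> d \<le> norm (x0 i - x0 k)"
    using exists_sep by blast
  define W where "W = sqrt (\<Sum>i<N. inner (v0 i) (v0 i)) + 1"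
  define K where "K = 4 * W * ((d/2) powr (-\<alpha>) + (c/2) powr (-\<alpha>))"
  define t1 where "t1 = (c / 8 / (K / (1 - \<alpha>))) powr (1 / (1 - \<alpha>))"
  define t where "t = min (min T 1) (min (d / (4 * W)) t1)"
  have W0: "W > 0"
  proof -
    have "0 \<le> sqrt (\<Sum>i<N. inner (v0 i) (v0 i))" by (intro real_sqrt_ge_zero sum_nonneg) auto
    then show ?thesis unfolding W_def by linarith
  qed
  have K0: "K > 0" unfolding K_def using W0 c d by (intro mult_pos_pos add_pos_pos) auto
  have Ka: "K / (1 - \<alpha>) > 0" using K0 alpha by simp
  have "c / 8 / (K / (1 - \<alpha>)) \<noteq> 0" using c Ka K0 alpha by simp
  then have t10: "t1 > 0" unfolding t1_def by simp
  have dW: "0 < d / (4 * W)" using d W0 by (intro divide_pos_pos) auto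
  have t0: "0 < t" unfolding t_def using T dW t10 by simp
  have tT: "t \<le> T" "t \<le> 1" unfolding t_def by auto
  have td: "4 * W * t \<le> d"
  proof -
    have "t \<le> d / (4 * W)" unfolding t_def by auto
    then have "4 * W * t \<le> 4 * W * (d / (4 * W))" using W0 by (intro mult_left_mono) auto
    then show ?thesis using W0 by simp
  qed
  have tc: "K / (1 - \<alpha>) * t powr (1 - \<alpha>) \<le> c / 8"
  proof -
    have "t powr (1 - \<alpha>) \<le> t1 powr (1 - \<alpha>)"
      using t0 alpha unfolding t_def by (intro powr_mono2) auto
    also have "t1 powr (1 - \<alpha>) = c / 8 / (K / (1 - \<alpha>))"
      unfolding t1_def using alpha c Ka K0 by (simp add: powr_powr)
    finally have "K / (1 - \<alpha>) * t powr (1 - \<alpha>) \<le> K / (1 - \<alpha>) * (c / 8 / (K / (1 - \<alpha>)))"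
      using Ka by (intro mult_left_mono) auto
    also have "\<dots> = c / 8" using Ka K0 alpha by simp
    finally show ?thesis .
  qed
  have H: "norm (v n i s - v n i s') \<le> K / (1 - \<alpha>) * \<bar>s - s'\<bar> powr (1 - \<alpha>)"
    if n: "n \<ge> 2" and i: "i < N" and s: "s \<in> {0..t}" and s': "s' \<in> {0..t}" for n i s s'
  proof -
    interpret P: psiloc \<alpha> "psi n" n
      using alpha n psi_far psi_near psi_smooth psi_mono by unfold_locales auto
    obtain L where L: "\<forall>s\<ge>0. \<forall>s'\<ge>0. \<bar>psi n s - psi n s'\<bar> \<le> L * \<bar>s - s'\<bar>"
      using P.p_lip by blast
    interpret S0: sys N T "psi n" L "x n" "v n"
      using T N P.p_nonneg L ode_x[OF n] ode_v[OF n] by unfold_locales auto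
    have VW: "S0.V \<le> W"
    proof -
      have "S0.V = sqrt (\<Sum>i<N. inner (v0 i) (v0 i))"
        unfolding S0.V_def S0.E_def using init_v[OF n] by simp
      then show ?thesis unfolding W_def by simp
    qed
    interpret S: sys2 N T "psi n" L "x n" "v n" \<alpha> c d W t x0 v0
      using alpha P.p_bound init_x[OF n] init_v[OF n] c d W0 VW t0 tT td tc
      by unfold_locales (auto simp: K_def)
    show ?thesis using S.holder[OF i s s'] unfolding S.K_def K_def .
  qed
  show ?thesis
    using t0 tT alpha H by (intro exI[of _ t] conjI exI[of _ "1 - \<alpha>"] exI[of _ "K / (1 - \<alpha>)"]) auto
qed


end
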